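(* Let $\kappa$ be a regular infinite cardinal, $I$ a nonempty set, $(S,\Sigma_S)$ a $\kappa$-measurable space separating points. Let $\underline M=\langle M,\Sigma,(T_i)_{i\in I},\theta\rangle$ and $\underline N=\langle N,\Sigma^N,(T_i^N)_{i\in I},\theta^N\rangle$ be $\kappa$-type spaces on $S$ for player set $I$ and $f:M\to N$ a type morphism. Then for all $m\in M$, $D(f(m))=D(m)$, i.e., for every $\kappa$-expression $\varphi$, $f(m)\in\varphi^{\underline N}$ iff $m\in\varphi^{\underline M}$.
   Context: A $\kappa$-field on a nonempty set is a field closed under intersections of fewer than $\kappa$ members. $\Delta^\kappa(M,\Sigma)$: finitely additive probability measures on $(M,\Sigma)$ with the $\kappa$-field generated by $\{\mu:\mu(E)\ge p\}$. "Separating points": for $s\neq s'$ in $S$ some $E\in\Sigma_S$ contains $s$ but not $s'$. A $\kappa$-type space on $S$ for $I$ is $\langle M,\Sigma,(T_i)_{i\in I},\theta\rangle$ with $\Sigma$ a $\kappa$-field on nonempty $M$, each $T_i:M\to\Delta^\kappa(M,\Sigma)$ measurable with: $\{m':T_i(m')=T_i(m)\}\subseteq A\in\Sigma$ implies $T_i(m)(A)=1$; and $\theta:M\to S$ measurable. A type morphism $f:M\to N$ is measurable with $\theta(m)=\theta^N(f(m))$ and $T_i^N(f(m))(E)=T_i(m)(f^{-1}(E))$ for all $m$, $E\in\Sigma^N$, $i$. $\kappa$-expressions: least set containing each $E\in\Sigma_S$ and closed under $\neg$, $B_i^p$ ($i\in I$, $p\in[0,1]$), and conjunctions of fewer than $\kappa$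 (nonempty) expressions. Semantics: $E^{\underline M}=\theta^{-1}(E)$, complement, $(B_i^p\varphi)^{\underline M}=\{m:T_i(m)(\varphi^{\underline M})\ge p\}$, intersection. $D(m)=\{\varphi:m\in\varphi^{\underline M}\}$. *)

theory Defs
  imports Complex_Main
begin

definition lt_card :: "'a set \<Rightarrow> 'k rel \<Rightarrow> bool" where
  "lt_card A \<kappa> \<longleftrightarrow> (card_of A, \<kappa>) \<in> ordLess"

definition kfield :: "'k rel \<Rightarrow> 'a set \<Rightarrow> 'a set set \<Rightarrow> bool" where
  "kfield \<kappa> X F \<longleftrightarrow> X \<noteq> {} \<and> F \<subseteq> Pow X \<and> X \<in> F
     \<and> (\<forall>A\<in>F. X - A \<in> F)
     \<and> (\<forall>A\<in>F. \<forall>B\<in>F. A \<union> B \<in> F)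
     \<and> (\<forall>\<A>. \<A> \<subseteq> F \<and> \<A> \<noteq> {} \<and> lt_card \<A> \<kappa> \<longrightarrow> \<Inter>\<A> \<in> F)"

definition kfield_gen :: "'k rel \<Rightarrow> 'a set \<Rightarrow> 'a set set \<Rightarrow> 'a set set" where
  "kfield_gen \<kappa> X G = \<Inter>{F. kfield \<kappa> X F \<and> G \<subseteq> F}"

definition kmeasurable :: "'a set \<Rightarrow> 'a set set \<Rightarrow> 'b set \<Rightarrow> 'b set set \<Rightarrow> ('a \<Rightarrow> 'b) \<Rightarrow> bool" where
  "kmeasurable X FX Y FY f \<longleftrightarrow> f ` X \<subseteq> Y \<and> (\<forall>E\<in>FY. f -` E \<inter> X \<in> FX)"

(* finitely additive probability measures on (X, F); a measure is represented as a
   function on all sets which is 0 outside F (canonical representative) *)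
definition fa_prob :: "'a set \<Rightarrow> 'a set set \<Rightarrow> ('a set \<Rightarrow> real) set" where
  "fa_prob X F = {\<mu>. (\<forall>A\<in>F. 0 \<le> \<mu> A) \<and> \<mu> X = 1
      \<and> (\<forall>A\<in>F. \<forall>B\<in>F. A \<inter> B = {} \<longrightarrow> \<mu> (A \<union> B) = \<mu> A + \<mu> B)
      \<and> (\<forall>A. A \<notin> F \<longrightarrow> \<mu> A = 0)}"

definition Delta_field :: "'k rel \<Rightarrow> 'a set \<Rightarrow> 'a set set \<Rightarrow> ('a set \<Rightarrow> real) set set" where
  "Delta_field \<kappa> X F = kfield_gen \<kappa> (fa_prob X F)
      {{\<mu> \<in> fa_prob X F. \<mu> E \<ge> p} | E p. E \<in> F \<and> 0 \<le> p \<and> p \<le> 1}"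

definition separates_points :: "'s set \<Rightarrow> 's set set \<Rightarrow> bool" where
  "separates_points S F \<longleftrightarrow> (\<forall>s\<in>S. \<forall>s'\<in>S. s \<noteq> s' \<longrightarrow> (\<exists>E\<in>F. s \<in> E \<and> s' \<notin> E))"

definition ktype_space :: "'k rel \<Rightarrow> 's set \<Rightarrow> 's set set \<Rightarrow> 'i set \<Rightarrow>
    'm set \<Rightarrow> 'm set set \<Rightarrow> ('i \<Rightarrow> 'm \<Rightarrow> 'm set \<Rightarrow> real) \<Rightarrow> ('m \<Rightarrow> 's) \<Rightarrow> bool" where
  "ktype_space \<kappa> S SigS I M Sig T \<theta> \<longleftrightarrow>
     kfield \<kappa> M Sig
     \<and> (\<forall>i\<in>I. kmeasurable M Sig (fa_prob M Sig) (Delta_field \<kappa> M Sig) (T i))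
     \<and> (\<forall>i\<in>I. \<forall>m\<in>M. \<forall>A\<in>Sig. {m'\<in>M. T i m' = T i m} \<subseteq> A \<longrightarrow> T i m A = 1)
     \<and> kmeasurable M Sig S SigS \<theta>"

definition type_morphism :: "'i set \<Rightarrow>
    'm set \<Rightarrow> 'm set set \<Rightarrow> ('i \<Rightarrow> 'm \<Rightarrow> 'm set \<Rightarrow> real) \<Rightarrow> ('m \<Rightarrow> 's) \<Rightarrow>
    'n set \<Rightarrow> 'n set set \<Rightarrow> ('i \<Rightarrow> 'n \<Rightarrow> 'n set \<Rightarrow> real) \<Rightarrow> ('n \<Rightarrow> 's) \<Rightarrow>
    ('m \<Rightarrow> 'n) \<Rightarrow> bool" where
  "type_morphism I M Sig T \<theta> N SigN TN \<theta>N f \<longleftrightarrow>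
     kmeasurable M Sig N SigN f
     \<and> (\<forall>m\<in>M. \<theta> m = \<theta>N (f m))
     \<and> (\<forall>m\<in>M. \<forall>E\<in>SigN. \<forall>i\<in>I. TN i (f m) E = T i m (f -` E \<inter> M))"

(* syntax of expressions; conjunctions are indexed by subsets of the type 'x *)
datatype ('s, 'i, 'x) kexpr =
    Atom "'s set"
  | Neg "('s, 'i, 'x) kexpr"
  | Bel 'i real "('s, 'i, 'x) kexpr"
  | Conj "'x set" "'x \<Rightarrow> ('s, 'i, 'x) kexpr"

inductive kexpr_wf :: "'k rel \<Rightarrow> 's set set \<Rightarrow> 'i set \<Rightarrow> ('s, 'i, 'x) kexpr \<Rightarrow> bool"
  for \<kappa> SigS I where
  "E \<in> SigS \<Longrightarrow> kexpr_wf \<kappa> SigS I (Atom E)"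
| "kexpr_wf \<kappa> SigS I \<phi> \<Longrightarrow> kexpr_wf \<kappa> SigS I (Neg \<phi>)"
| "i \<in> I \<Longrightarrow> 0 \<le> p \<Longrightarrow> p \<le> 1 \<Longrightarrow> kexpr_wf \<kappa> SigS I \<phi> \<Longrightarrow> kexpr_wf \<kappa> SigS I (Bel i p \<phi>)"
| "A \<noteq> {} \<Longrightarrow> lt_card A \<kappa> \<Longrightarrow> (\<forall>x\<in>A. kexpr_wf \<kappa> SigS I (F x)) \<Longrightarrow> kexpr_wf \<kappa> SigS I (Conj A F)"

primrec ksem :: "'m set \<Rightarrow> ('i \<Rightarrow> 'm \<Rightarrow> 'm set \<Rightarrow> real) \<Rightarrow> ('m \<Rightarrow> 's) \<Rightarrow>
    ('s, 'i, 'x) kexpr \<Rightarrow> 'm set" where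
  "ksem M T \<theta> (Atom E) = \<theta> -` E \<inter> M"
| "ksem M T \<theta> (Neg \<phi>) = M - ksem M T \<theta> \<phi>"
| "ksem M T \<theta> (Bel i p \<phi>) = {m \<in> M. T i m (ksem M T \<theta> \<phi>) \<ge> p}"
| "ksem M T \<theta> (Conj A F) = M \<inter> (\<Inter>x\<in>A. ksem M T \<theta> (F x))"

definition kdesc :: "'k rel \<Rightarrow> 's set set \<Rightarrow> 'i set \<Rightarrow> 'm set \<Rightarrow>
    ('i \<Rightarrow> 'm \<Rightarrow> 'm set \<Rightarrow> real) \<Rightarrow> ('m \<Rightarrow> 's) \<Rightarrow> 'm \<Rightarrow> ('s, 'i, 'x) kexpr set" where
  "kdesc \<kappa> SigS I M T \<theta> m = {\<phi>. kexpr_wf \<kappa> SigS I \<phi> \<and> m \<in> ksem M T \<theta> \<phi>}"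

end

theory Submission
  imports Defs
begin

lemma ksem_sub: "ksem M T \<theta> \<phi> \<subseteq> M"
  by (induction \<phi>) auto

lemma key:
  fixes \<phi> :: "('s, 'i, 'x) kexpr"
  assumes wf: "kexpr_wf \<kappa> SigS I \<phi>"
    and tN: "ktype_space \<kappa> S SigS I N SigN TN \<theta>N"
    and mor: "type_morphism I M Sig T \<theta> N SigN TN \<theta>N f"
  shows "ksem N TN \<theta>N \<phi> \<in> SigN \<and> f -` ksem N TN \<theta>N \<phi> \<inter> M = ksem M T \<theta> \<phi>"
  using wf
proof (induction rule: kexpr_wf.induct)
  have kf: "kfield \<kappa> N SigN" and thN: "kmeasurable N SigN S SigS \<theta>N"
    and Tm: "\<forall>i\<in>I. kmeasurable N SigN (fa_prob N SigN) (Delta_field \<kappa> N SigN) (TN i)"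
    using tN unfolding ktype_space_def by auto
  have fM: "f ` M \<subseteq> N" and th: "\<forall>m\<in>M. \<theta> m = \<theta>N (f m)"
    and tr: "\<forall>m\<in>M. \<forall>E\<in>SigN. \<forall>i\<in>I. TN i (f m) E = T i m (f -` E \<inter> M)"
    using mor unfolding type_morphism_def kmeasurable_def by auto
  {
    case (1 E)
    then show ?case using thN th fM unfolding kmeasurable_def by auto
  next
    case (2 \<phi>)
    then show ?case using kf fM unfolding kfield_def by auto
  next
    case (3 i p \<phi>)
    let ?X = "ksem N TN \<theta>N \<phi>"
    have X: "?X \<in> SigN" using 3 by simp
    have G: "{\<mu> \<in> fa_prob N SigN. \<mu> ?X \<ge> p} \<in> Delta_field \<kappa> N SigN"
      unfolding Delta_field_def kfield_gen_def using X 3 by blast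
    have eq: "{n \<in> N. TN i n ?X \<ge> p} = TN i -` {\<mu> \<in> fa_prob N SigN. \<mu> ?X \<ge> p} \<inter> N"
      using Tm 3 unfolding kmeasurable_def by auto
    have m1: "{n \<in> N. TN i n ?X \<ge> p} \<in> SigN"
      unfolding eq using Tm 3 G unfolding kmeasurable_def by blast
    have "f -` {n \<in> N. TN i n ?X \<ge> p} \<inter> M = {m \<in> M. T i m (f -` ?X \<inter> M) \<ge> p}"
      using fM tr X 3 by auto
    then show ?case using m1 3 by simp
  next
    case (4 A F)
    let ?C = "(\<lambda>x. ksem N TN \<theta>N (F x)) ` A"
    have sub: "?C \<subseteq> SigN" using 4 by auto
    have ne: "?C \<noteq> {}" using 4 by auto
    have "(card_of ?C, card_of A) \<in> ordLeq" by (rule card_of_image)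
    then have lt: "lt_card ?C \<kappa>" using 4 unfolding lt_card_def
      using ordLeq_ordLess_trans by blast
    have I1: "\<Inter>?C \<in> SigN" using kf sub ne lt unfolding kfield_def by blast
    have subN: "\<Inter>?C \<subseteq> N"
    proof -
      obtain x0 where x0: "x0 \<in> A" using 4 by blast
      have "\<Inter>?C \<subseteq> ksem N TN \<theta>N (F x0)" using x0 by (rule INT_lower)
      also have "\<dots> \<subseteq> N" by (rule ksem_sub)
      finally show ?thesis .
    qed
    have e1: "ksem N TN \<theta>N (Conj A F) = \<Inter>?C" using subN by auto
    have a1: "f -` (\<Inter>?C) \<inter> M = M \<inter> (\<Inter>x\<in>A. f -` ksem N TN \<theta>N (F x) \<inter> M)"
      using ne by auto
    have a2: "(\<Inter>x\<in>A. f -` ksem N TN \<theta>N (F x) \<inter> M) = (\<Inter>x\<in>A. ksem M T \<theta> (F x))"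
      using 4 by (intro INF_cong) auto
    have "f -` (\<Inter>?C) \<inter> M = M \<inter> (\<Inter>x\<in>A. ksem M T \<theta> (F x))"
      using a1 a2 by simp
    then show ?case using e1 I1 by simp
  }
qed

theorem proposition2:
  fixes \<kappa> :: "'k rel" and S :: "'s set" and SigS :: "'s set set" and I :: "'i set"
    and M :: "'m set" and Sig :: "'m set set" and T :: "'i \<Rightarrow> 'm \<Rightarrow> 'm set \<Rightarrow> real"
    and \<theta> :: "'m \<Rightarrow> 's"
    and N :: "'n set" and SigN :: "'n set set" and TN :: "'i \<Rightarrow> 'n \<Rightarrow> 'n set \<Rightarrow> real"
    and \<theta>N :: "'n \<Rightarrow> 's" and f :: "'m \<Rightarrow> 'n"
  assumes "Card_order \<kappa>" and "infinite (Field \<kappa>)" and "regularCard \<kappa>"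
    and "I \<noteq> {}"
    and "kfield \<kappa> S SigS" and "separates_points S SigS"
    and "ktype_space \<kappa> S SigS I M Sig T \<theta>"
    and "ktype_space \<kappa> S SigS I N SigN TN \<theta>N"
    and "type_morphism I M Sig T \<theta> N SigN TN \<theta>N f"
  shows "\<forall>m\<in>M. (kdesc \<kappa> SigS I N TN \<theta>N (f m) :: ('s, 'i, 'x) kexpr set)
                 = kdesc \<kappa> SigS I M T \<theta> m"
proof (intro ballI set_eqI)
  fix m and \<phi> :: "('s, 'i, 'x) kexpr"
  assume m: "m \<in> M"
  show "\<phi> \<in> kdesc \<kappa> SigS I N TN \<theta>N (f m) \<longleftrightarrow> \<phi> \<in> kdesc \<kappa> SigS I M T \<theta> m"
  proof (cases "kexpr_wf \<kappa> SigS I \<phi>")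
    case True
    from key[OF True assms(8,9)] m show ?thesis unfolding kdesc_def by auto
  qed (simp add: kdesc_def)
qed

end
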